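(* Consider the stochastic primal-dual hybrid gradient (SPDHG) method described in the context, run with step-sizes $\beta^{k+1} = \frac{1}{\sqrt{k+1}+L}$ and uniform averaging weights $\alpha^{k+1} = \frac{1}{t+1}$, $k=0,\dots,t$. Let $(y^*,x^* )$ be any saddle point of $\min_{x\in\mathcal{X}}\max_{y\in\mathcal{Y}} P(y,x)$. Then for every $t\ge 0$, $$0\le \mathbb{E}\left[P(y^*,\bar{x}^t) - P(\bar{y}^t,x^* )\right] \le \frac{D_y^2}{2s(t+1)} + \frac{L D_x^2}{2(t+1)} + \frac{D_x^2+2\lambda_{\max}(F^\top F)D_y^2+2\sigma^2}{\sqrt{t+1}},$$ i.e. $(\bar y^t,\bar x^t)$ converges to the saddle point at rate $O(1/\sqrt{t})$ in expectation.
   Context: Setting: $\mathcal{X}\subset\mathbb{R}^d$ is a nonempty convex compact set with diameter $D_x$ (so $\|x-x'\|\le D_x$ for all $x,x'\in\mathcal{X}$), $\mathcal{Y}\subset\mathbb{R}^l$ is a nonempty convex compact set with diameter $D_y$, $F\in\mathbb{R}^{l\times d}$, and $\lambda_{\max}(F^\top F)$ denotes the largest eigenvalue of $F^\top F$. The regularizer is $r(z)=\max_{y\in\mathcal{Y}}\langle y,z\rangle$. The loss is $l(x)=\mathbb{E}_\xi[l(x,\xi)]$, a convex, continuously differentiable function on $\mathcal{X}$ with $L$-Lipschitz gradient: $\|\nabla l(x_1)-\nabla l(x_2)\|\le L\|x_1-x_2\|$ for all $x_1,x_2\in\mathcal{X}$. The stochastic gradient $\nabla l(x,\xi)$ satisfies,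 for every $x\in\mathcal{X}$: $\mathbb{E}[\nabla l(x,\xi)]=\nabla l(x)$, $\mathbb{E}\|\nabla l(x,\xi)-\nabla l(x)\|^2\le\sigma^2$, and $\mathbb{E}\exp\left(\|\nabla l(x,\xi)-\nabla l(x)\|^2/\sigma^2\right)\le \exp(1)$, for a constant $\sigma>0$. The saddle function is $P(y,x)=l(x)+\langle y,Fx\rangle$ for $x\in\mathcal{X},y\in\mathcal{Y}$; a saddle point $(y^*,x^* )$ satisfies $P(y,x^* )\le P(y^*,x^* )\le P(y^*,x)$ for all $(y,x)\in\mathcal{Y}\times\mathcal{X}$ (assumed to exist). SPDHG: fix $s>0$, $x^0\in\mathcal{X}$, $y^0\in\mathcal{Y}$, and a sequence of step-sizes $\beta^{k+1}>0$. For $k=0,1,2,\dots$, draw a sample $\xi^{k+1}$ independently of the past (i.i.d. samples), and set $$y^{k+1}=\arg\max_{y\in\mathcal{Y}}\Big\{P(y,x^k)-\tfrac{1}{2s}\|y-y^k\|^2\Big\},\qquad x^{k+1}=\Pi_{\mathcal{X}}\Big[x^k-\beta^{k+1}\big(\nabla l(x^k,\xi^{k+1})+F^\top y^{k+1}\big)\Big],$$ where $\Pi_{\mathcal{X}}$ is Euclidean projection onto $\mathcal{X}$. Given weights $\alpha^{k+1}\ge0$ with $\sum_{k=0}^t\alpha^{k+1}=1$, the output after $t$ steps is $\bar x^t=\sum_{k=0}^t\alpha^{k+1}x^{k+1}$, $\bar y^t=\sum_{k=0}^t\alpha^{k+1}y^{k+1}$. *)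

theory Defs
  imports "HOL-Analysis.Analysis" "HOL-Probability.Probability"
begin

definition Psaddle :: "(real^'n \<Rightarrow> real) \<Rightarrow> real^'n^'m \<Rightarrow> real^'m \<Rightarrow> real^'n \<Rightarrow> real" where
  "Psaddle l F y x = l x + inner y (F *v x)"

definition is_saddle_point ::
  "'a set \<Rightarrow> 'b set \<Rightarrow> ('a \<Rightarrow> 'b \<Rightarrow> real) \<Rightarrow> 'a \<Rightarrow> 'b \<Rightarrow> bool" where
  "is_saddle_point Y X P ys xs \<longleftrightarrow> ys \<in> Y \<and> xs \<in> X \<and>
     (\<forall>y\<in>Y. P y xs \<le> P ys xs) \<and> (\<forall>x\<in>X. P ys xs \<le> P ys x)"

definition lambda_max :: "real^'n^'n \<Rightarrow> real" where
  "lambda_max A = Max {\<mu>. \<exists>v. v \<noteq> 0 \<and> A *v v = \<mu> *\<^sub>R v}"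

end

theory Submission
  imports Defs
begin
lemma seg_in:
  fixes a b :: "'a::real_vector"
  assumes "convex X" "a\<in>X" "b\<in>X" "\<theta> \<in> {0..1::real}"
  shows "a + \<theta> *\<^sub>R (b - a) \<in> X"
proof -
  have "a + \<theta> *\<^sub>R (b - a) = (1-\<theta>) *\<^sub>R a + \<theta> *\<^sub>R b" by (simp add: algebra_simps)
  thus ?thesis using assms convexD_alt by fastforce
qed

lemma path_deriv:
  fixes l :: "'a::real_inner \<Rightarrow> real"
  assumes d: "\<forall>z\<in>X. (l has_derivative (\<lambda>h. inner (gl z) h)) (at z within X)"
    and X: "convex X" and ab: "a\<in>X" "b\<in>X" and th: "\<theta>\<in>{0..1}"
  shows "((\<lambda>\<theta>. l (a + \<theta> *\<^sub>R (b-a))) has_derivative (\<lambda>h. h * inner (gl (a + \<theta>*\<^sub>R(b-a))) (b-a))) (at \<theta> within {0..1})"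
proof -
  have p: "((\<lambda>\<theta>. a + \<theta> *\<^sub>R (b-a)) has_derivative (\<lambda>h. h *\<^sub>R (b-a))) (at \<theta> within {0..1})"
    by (auto intro!: derivative_eq_intros)
  have sub: "(\<lambda>\<theta>. a + \<theta> *\<^sub>R (b-a)) ` {0..1} \<subseteq> X" using seg_in[OF X ab] by auto
  have "(l has_derivative (\<lambda>h. inner (gl (a + \<theta>*\<^sub>R(b-a))) h)) (at (a + \<theta>*\<^sub>R(b-a)) within (\<lambda>\<theta>. a + \<theta> *\<^sub>R (b-a)) ` {0..1})"
    using d seg_in[OF X ab th] has_derivative_subset[OF _ sub] by blast
  from has_derivative_in_compose[OF p this] show ?thesis by simp
qed

lemma descent:
  fixes l :: "'a::real_inner \<Rightarrow> real"
  assumes d: "\<forall>z\<in>X. (l has_derivative (\<lambda>h. inner (gl z) h)) (at z within X)"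
    and X: "convex X" and ab: "a\<in>X" "b\<in>X"
    and Lip: "\<forall>z1\<in>X. \<forall>z2\<in>X. norm (gl z1 - gl z2) \<le> L * norm (z1 - z2)"
  shows "l b \<le> l a + inner (gl a) (b - a) + L/2 * (norm (b-a))\<^sup>2"
proof -
  define g where "g = (\<lambda>\<theta>::real. l (a + \<theta> *\<^sub>R (b-a)) - \<theta> * inner (gl a) (b-a) - L/2 * \<theta>\<^sup>2 * (norm (b-a))\<^sup>2)"
  define g' where "g' = (\<lambda>\<theta> h::real. h * inner (gl (a + \<theta>*\<^sub>R(b-a))) (b-a) - h * inner (gl a) (b-a) - L/2 * (2 * \<theta> * h) * (norm (b-a))\<^sup>2)"
  have "\<exists>\<theta>\<in>{0..1}. g 1 - g 0 = g' \<theta> (1 - 0)"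
  proof (rule mvt_very_simple)
    fix \<theta> :: real assume "0 \<le> \<theta>" "\<theta> \<le> 1"
    then have th: "\<theta> \<in> {0..1}" by auto
    show "(g has_derivative g' \<theta>) (at \<theta> within {0..1})"
      unfolding g_def g'_def
      by (rule derivative_eq_intros path_deriv[OF d X ab th] refl | simp add: fun_eq_iff algebra_simps)+
  qed simp
  then obtain \<theta> where th: "\<theta>\<in>{0..1}" and eq: "g 1 - g 0 = g' \<theta> 1" by auto
  have "inner (gl (a + \<theta>*\<^sub>R(b-a)) - gl a) (b-a) \<le> norm (gl (a + \<theta>*\<^sub>R(b-a)) - gl a) * norm (b-a)"
    by (rule norm_cauchy_schwarz)
  also have "\<dots> \<le> L * norm (\<theta>*\<^sub>R(b-a)) * norm (b-a)"
  proof (rule mult_right_mono)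
    have "norm (gl (a + \<theta>*\<^sub>R(b-a)) - gl a) \<le> L * norm ((a + \<theta>*\<^sub>R(b-a)) - a)"
      using Lip seg_in[OF X ab th] ab by blast
    thus "norm (gl (a + \<theta>*\<^sub>R(b-a)) - gl a) \<le> L * norm (\<theta>*\<^sub>R(b-a))" by simp
  qed simp
  also have "\<dots> = L * \<theta> * (norm (b-a))\<^sup>2" using th by (simp add: power2_eq_square)
  finally have "g' \<theta> 1 \<le> 0" unfolding g'_def by (simp add: inner_diff_left)
  with eq show ?thesis unfolding g_def by simp
qed

lemma tangent:
  fixes l :: "'a::real_inner \<Rightarrow> real"
  assumes d: "\<forall>z\<in>X. (l has_derivative (\<lambda>h. inner (gl z) h)) (at z within X)"
    and X: "convex X" and ab: "a\<in>X" "b\<in>X"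
    and cvx: "convex_on X l"
  shows "l a + inner (gl a) (b - a) \<le> l b"
proof (rule ccontr)
  assume neg: "\<not> ?thesis"
  define c where "c = inner (gl a) (b - a) - (l b - l a)"
  have c: "c > 0" using neg unfolding c_def by simp
  define \<phi> where "\<phi> = (\<lambda>\<theta>::real. l (a + \<theta> *\<^sub>R (b-a)) - \<theta> * (l b - l a))"
  have "(\<phi> has_derivative (\<lambda>h. h * inner (gl (a + 0*\<^sub>R(b-a))) (b-a) - h * (l b - l a))) (at 0 within {0..1})"
    unfolding \<phi>_def
    by (rule derivative_eq_intros path_deriv[OF d X ab] refl | simp)+
  then have "(\<phi> has_real_derivative c) (at 0 within {0..1})"
  proof -
    have "(\<lambda>h. h * inner (gl (a + 0*\<^sub>R(b-a))) (b-a) - h * (l b - l a)) = (*) c"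
      unfolding c_def by (auto simp: fun_eq_iff algebra_simps)
    with \<open>(\<phi> has_derivative _) _\<close> show ?thesis unfolding has_field_derivative_def by simp
  qed
  from has_real_derivative_pos_inc_right[OF this c] obtain e where e: "e > 0"
    "\<forall>h>0. 0 + h \<in> {0..1} \<longrightarrow> h < e \<longrightarrow> \<phi> 0 < \<phi> (0 + h)" by blast
  define h where "h = min (e/2) 1"
  have h: "h > 0" "h \<le> 1" "h < e" using e unfolding h_def by auto
  have "\<phi> 0 < \<phi> h" using e(2) h by auto
  moreover have "l (a + h *\<^sub>R (b-a)) \<le> (1-h) * l a + h * l b"
  proof -
    have "a + h *\<^sub>R (b - a) = (1-h) *\<^sub>R a + h *\<^sub>R b" by (simp add: algebra_simps)
    thus ?thesis using convex_onD[OF cvx, of h a b] ab h by simp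
  qed
  ultimately show False unfolding \<phi>_def by (simp add: algebra_simps)
qed

lemma FtF_inner:
  fixes F :: "real^'n^'m"
  shows "inner ((transpose F ** F) *v v) w = inner (F *v v) (F *v w)"
proof -
  have "(transpose F ** F) *v v = transpose F *v (F *v v)" by (simp add: matrix_vector_mul_assoc)
  also have "\<dots> = (F *v v) v* F" by simp
  finally show ?thesis by (simp add: dot_lmul_matrix)
qed

lemma quad_small:
  fixes \<alpha> \<beta> :: real
  assumes "\<forall>\<theta>>0. 2*\<theta>*\<alpha> + \<theta>\<^sup>2*\<beta> \<le> 0"
  shows "\<alpha> \<le> 0"
proof (rule ccontr)
  assume "\<not> \<alpha> \<le> 0"
  hence a: "\<alpha> > 0" by simp
  define \<theta> where "\<theta> = \<alpha> / (\<bar>\<beta>\<bar> + 1)"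
  have th: "\<theta> > 0" using a unfolding \<theta>_def by simp
  have "2*\<theta>*\<alpha> + \<theta>\<^sup>2*\<beta> \<le> 0" using assms th by blast
  hence 1: "\<theta> * (2*\<alpha> + \<theta>*\<beta>) \<le> 0" by (simp add: power2_eq_square algebra_simps)
  have "2*\<alpha> + \<theta>*\<beta> \<le> 0"
  proof (rule ccontr)
    assume "\<not> ?thesis"
    then have "\<theta> * (2*\<alpha> + \<theta>*\<beta>) > 0" using th by simp
    with 1 show False by simp
  qed
  moreover have "\<theta>*(-\<bar>\<beta>\<bar>) \<le> \<theta>*\<beta>" using th by (intro mult_left_mono) auto
  moreover have "\<theta> * \<bar>\<beta>\<bar> \<le> \<alpha>" unfolding \<theta>_def using a
    by (simp add: divide_le_eq mult.commute)
  ultimately show False using a by simp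
qed

lemma eig_finite:
  fixes F :: "real^'n^'m"
  shows "finite {\<mu>. \<exists>v. v \<noteq> 0 \<and> (transpose F ** F) *v v = \<mu> *\<^sub>R v}" (is "finite ?S")
proof -
  let ?A = "transpose F ** F"
  define f where "f = (\<lambda>\<mu>. SOME v. v \<noteq> 0 \<and> ?A *v v = \<mu> *\<^sub>R v)"
  have f: "f \<mu> \<noteq> 0 \<and> ?A *v f \<mu> = \<mu> *\<^sub>R f \<mu>" if "\<mu> \<in> ?S" for \<mu>
  proof -
    have "\<exists>v. v \<noteq> 0 \<and> ?A *v v = \<mu> *\<^sub>R v" using that by simp
    then show ?thesis unfolding f_def by (rule someI_ex)
  qed
  have inj: "inj_on f ?S"
  proof (rule inj_onI)
    fix a b assume ab: "a \<in> ?S" "b \<in> ?S" "f a = f b"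
    have "a *\<^sub>R f a = ?A *v f a" using f[OF ab(1)] by simp
    also have "\<dots> = ?A *v f b" using ab(3) by simp
    also have "\<dots> = b *\<^sub>R f b" using f[OF ab(2)] by simp
    finally have "a *\<^sub>R f a = b *\<^sub>R f a" using ab(3) by simp
    thus "a = b" using f[OF ab(1)] by simp
  qed
  have orth: "pairwise orthogonal (f ` ?S)"
    unfolding pairwise_def
  proof (intro ballI impI)
    fix p q assume "p \<in> f ` ?S" "q \<in> f ` ?S" "p \<noteq> q"
    then obtain a b where ab: "a \<in> ?S" "b \<in> ?S" "p = f a" "q = f b" by blast
    have "a \<noteq> b" using ab \<open>p \<noteq> q\<close> by blast
    have e1: "inner (?A *v f a) (f b) = a * inner (f a) (f b)" using f[OF ab(1)] by simp
    have e2: "inner (?A *v f b) (f a) = b * inner (f a) (f b)"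
      using f[OF ab(2)] by (simp add: inner_commute)
    have e3: "inner (?A *v f a) (f b) = inner (?A *v f b) (f a)"
      unfolding FtF_inner by (rule inner_commute)
    have "a * inner (f a) (f b) = b * inner (f a) (f b)" using e1 e2 e3 by linarith
    hence "(a - b) * inner (f a) (f b) = 0" by (simp add: left_diff_distrib)
    thus "orthogonal p q" using \<open>a \<noteq> b\<close> ab unfolding orthogonal_def by simp
  qed
  have "0 \<notin> f ` ?S" using f by (metis (no_types, lifting) image_iff)
  have "finite (f ` ?S)"
    using finiteI_independent pairwise_orthogonal_independent[OF orth \<open>0 \<notin> f ` ?S\<close>] by blast
  thus ?thesis using inj finite_imageD by blast
qed

lemma norm_add_sq:
  fixes u z :: "'a::real_inner"
  shows "(norm (u + c *\<^sub>R z))\<^sup>2 = (norm u)\<^sup>2 + 2*c*inner u z + c\<^sup>2*(norm z)\<^sup>2"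
proof -
  have "(norm (u + c *\<^sub>R z))\<^sup>2 = inner (u + c *\<^sub>R z) (u + c *\<^sub>R z)" by (simp add: power2_norm_eq_inner)
  also have "\<dots> = inner u u + 2 * c * inner u z + c*c* inner z z"
    by (simp add: inner_add_left inner_add_right inner_commute[of z u] distrib_left)
  finally show ?thesis by (simp add: power2_norm_eq_inner[symmetric] power2_eq_square)
qed

lemma eig_bound:
  fixes F :: "real^'n^'m"
  shows "(norm (F *v v))\<^sup>2 \<le> lambda_max (transpose F ** F) * (norm v)\<^sup>2"
proof -
  let ?A = "transpose F ** F"
  let ?q = "\<lambda>v. (norm (F *v v))\<^sup>2"
  have "sphere (0::real^'n) 1 \<noteq> {}" by simp
  moreover have "continuous_on (sphere 0 1) ?q"
    by (intro continuous_intros)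
  ultimately obtain v0 where v0: "v0 \<in> sphere 0 1" "\<forall>v\<in>sphere 0 1. ?q v \<le> ?q v0"
    using continuous_attains_sup[of "sphere 0 1" ?q] by auto
  define \<mu> where "\<mu> = ?q v0"
  have nv0: "norm v0 = 1" using v0 by simp
  have qb: "?q v \<le> \<mu> * (norm v)\<^sup>2" for v
  proof (cases "v = 0")
    case True then show ?thesis by simp
  next
    case False
    then have "v /\<^sub>R norm v \<in> sphere 0 1" by simp
    then have "?q (v /\<^sub>R norm v) \<le> \<mu>" using v0 unfolding \<mu>_def by blast
    moreover have "?q (v /\<^sub>R norm v) = ?q v / (norm v)\<^sup>2"
      by (simp add: matrix_vector_mult_scaleR power_mult_distrib field_simps)
    ultimately show ?thesis using False by (simp add: divide_le_eq mult.commute)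
  qed
  define w where "w = ?A *v v0 - \<mu> *\<^sub>R v0"
  have "\<forall>\<theta>>0. 2*\<theta>*(norm w)\<^sup>2 + \<theta>\<^sup>2*(?q w - \<mu> * (norm w)\<^sup>2) \<le> 0"
  proof (intro allI impI)
    fix \<theta> :: real assume "\<theta> > 0"
    have 1: "?q (v0 + \<theta> *\<^sub>R w) \<le> \<mu> * (norm (v0 + \<theta> *\<^sub>R w))\<^sup>2" by (rule qb)
    have "F *v (v0 + \<theta> *\<^sub>R w) = F *v v0 + \<theta> *\<^sub>R (F *v w)"
      by (simp add: matrix_vector_right_distrib matrix_vector_mult_scaleR)
    then have 2: "?q (v0 + \<theta> *\<^sub>R w) = \<mu> + 2*\<theta>*inner (F *v v0) (F *v w) + \<theta>\<^sup>2 * ?q w"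
      unfolding \<mu>_def by (simp only: norm_add_sq)
    have 3: "(norm (v0 + \<theta> *\<^sub>R w))\<^sup>2 = 1 + 2*\<theta>*inner v0 w + \<theta>\<^sup>2 * (norm w)\<^sup>2"
      using nv0 by (simp add: norm_add_sq)
    have 4: "inner (F *v v0) (F *v w) - \<mu> * inner v0 w = (norm w)\<^sup>2"
      unfolding FtF_inner[symmetric] w_def power2_norm_eq_inner
      by (simp add: inner_diff_left inner_diff_right inner_commute[of v0 "?A *v v0"])
    have "\<mu> + 2*\<theta>*inner (F *v v0) (F *v w) + \<theta>\<^sup>2 * ?q w \<le> \<mu> * (1 + 2*\<theta>*inner v0 w + \<theta>\<^sup>2 * (norm w)\<^sup>2)"
      using 1 2 3 by simp
    then have "2*\<theta>*(inner (F *v v0) (F *v w) - \<mu> * inner v0 w) + \<theta>\<^sup>2*(?q w - \<mu> * (norm w)\<^sup>2) \<le> 0"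
      by (simp add: algebra_simps)
    then show "2*\<theta>*(norm w)\<^sup>2 + \<theta>\<^sup>2*(?q w - \<mu> * (norm w)\<^sup>2) \<le> 0" unfolding 4 .
  qed
  from quad_small[OF this] have "w = 0" by simp
  then have "?A *v v0 = \<mu> *\<^sub>R v0" unfolding w_def by simp
  moreover have "v0 \<noteq> 0" using nv0 by auto
  ultimately have "\<mu> \<in> {\<mu>. \<exists>v. v \<noteq> 0 \<and> ?A *v v = \<mu> *\<^sub>R v}" by blast
  then have "\<mu> \<le> lambda_max ?A" unfolding lambda_max_def using eig_finite[of F] by simp
  then show ?thesis using qb[of v] by (meson mult_right_mono order_trans zero_le_power2)
qed

lemma young_gen:
  fixes P A B r :: real
  assumes "A \<ge> 0" "B \<ge> 0" "r > 0" "P\<^sup>2 \<le> A * B"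
  shows "P \<le> A / r + r * B / 4"
proof -
  have "(A / r - r * B / 4)\<^sup>2 \<ge> 0" by simp
  then have "(A / r + r * B / 4)\<^sup>2 \<ge> 4 * (A / r) * (r * B / 4)"
    by (simp add: power2_eq_square algebra_simps)
  also have "4 * (A / r) * (r * B / 4) = A * B" using assms by simp
  finally have "P\<^sup>2 \<le> (A / r + r * B / 4)\<^sup>2" using assms by linarith
  moreover have "A / r + r * B / 4 \<ge> 0" using assms by simp
  ultimately have "\<bar>P\<bar> \<le> A / r + r * B / 4" using abs_le_square_iff by (metis abs_of_nonneg)
  thus ?thesis by simp
qed

lemma sq_le_of_abs: fixes p q :: real shows "\<bar>p\<bar> \<le> q \<Longrightarrow> p\<^sup>2 \<le> q\<^sup>2"
  by (metis abs_ge_zero power2_abs power_mono)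

lemma y_proj:
  fixes F :: "real^'n^'m"
  assumes Y: "convex Y" "closed Y" and y1: "y1 \<in> Y" and s: "s > 0"
    and opt: "\<forall>v\<in>Y. Psaddle l F v a - (norm (v - b))\<^sup>2 / (2 * s)
               \<le> Psaddle l F y1 a - (norm (y1 - b))\<^sup>2 / (2 * s)"
  shows "y1 = closest_point Y (b + s *\<^sub>R (F *v a))"
proof (rule closest_point_unique[OF Y y1], intro ballI)
  fix v assume v: "v \<in> Y"
  let ?c = "b + s *\<^sub>R (F *v a)"
  have e: "(norm (u - ?c))\<^sup>2 = (norm (u - b))\<^sup>2 - 2 * s * inner (u - b) (F *v a) + s\<^sup>2 * (norm (F *v a))\<^sup>2" for u
  proof -
    have uc: "u - ?c = (u - b) + (-s) *\<^sub>R (F *v a)" by (simp add: algebra_simps)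
    show ?thesis unfolding uc norm_add_sq by simp
  qed
  have "inner v (F *v a) - (norm (v - b))\<^sup>2 / (2 * s) \<le> inner y1 (F *v a) - (norm (y1 - b))\<^sup>2 / (2 * s)"
    using opt v unfolding Psaddle_def by auto
  then have "2 * s * (inner v (F *v a) - (norm (v - b))\<^sup>2 / (2 * s)) \<le> 2 * s * (inner y1 (F *v a) - (norm (y1 - b))\<^sup>2 / (2 * s))"
    using s by (intro mult_left_mono) auto
  then have "2 * s * inner v (F *v a) - (norm (v - b))\<^sup>2 \<le> 2 * s * inner y1 (F *v a) - (norm (y1 - b))\<^sup>2"
    using s by (simp add: right_diff_distrib)
  then have "(norm (y1 - ?c))\<^sup>2 \<le> (norm (v - ?c))\<^sup>2"
    unfolding e by (simp add: inner_diff_left algebra_simps)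
  then have "norm (y1 - ?c) \<le> norm (v - ?c)" by (rule power2_le_imp_le) simp
  then show "dist ?c y1 \<le> dist ?c v" by (simp add: dist_norm norm_minus_commute)
qed

lemma transpose_inner:
  fixes F :: "real^'n^'m"
  shows "inner (transpose F *v y) v = inner y (F *v v)"
  by (simp add: dot_lmul_matrix)

lemma step_ineq:
  fixes F :: "real^'n^'m" and l :: "real^'n \<Rightarrow> real"
  assumes X: "convex X" "closed X" and Y: "convex Y" "closed Y"
    and l_convex: "convex_on X l"
    and l_grad: "\<forall>z\<in>X. (l has_derivative (\<lambda>h. inner (gl z) h)) (at z within X)"
    and Lip: "\<forall>z1\<in>X. \<forall>z2\<in>X. norm (gl z1 - gl z2) \<le> L * norm (z1 - z2)"
    and s: "s > 0" and r: "r > 0" and L: "L \<ge> 0"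
    and xk: "xk \<in> X" and xs: "xs \<in> X" and ys: "ys \<in> Y"
    and DY: "norm (ys - y1) \<le> DY"
    and y1: "y1 = closest_point Y (yk + s *\<^sub>R (F *v xk))"
    and x1: "x1 = closest_point X (xk - (1/(r+L)) *\<^sub>R (g + transpose F *v y1))"
  shows "Psaddle l F ys x1 - Psaddle l F y1 xs \<le>
      (r+L)/2 * ((norm (xk-xs))\<^sup>2 - (norm (x1-xs))\<^sup>2)
      + ((norm (ys-yk))\<^sup>2 - (norm (ys-y1))\<^sup>2) / (2 * s)
      - inner (g - gl xk) (xk - xs) + (norm (g - gl xk))\<^sup>2 / r
      + lambda_max (transpose F ** F) * DY\<^sup>2 / r"
proof -
  define \<Delta> where "\<Delta> = x1 - xk"
  define \<delta> where "\<delta> = g - gl xk"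
  define w where "w = g + transpose F *v y1"
  define \<beta> where "\<beta> = 1/(r+L)"
  define lam where "lam = lambda_max (transpose F ** F)"
  have rL: "r + L > 0" using r L by simp
  have x1X: "x1 \<in> X" unfolding x1 using X closest_point_in_set xk by blast
  have y1Y: "y1 \<in> Y" unfolding y1 using Y closest_point_in_set ys by blast
  have "inner ((xk - \<beta> *\<^sub>R w) - x1) (xs - x1) \<le> 0"
    unfolding x1 w_def \<beta>_def using closest_point_dot[OF X xs] by simp
  then have "\<beta> * inner w (x1 - xs) \<le> inner (xk - x1) (x1 - xs)"
    by (simp add: inner_diff_left inner_diff_right algebra_simps)
  then have "(r+L) * (\<beta> * inner w (x1 - xs)) \<le> (r+L) * inner (xk - x1) (x1 - xs)"
    using rL by (simp add: mult_left_mono)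
  then have P1: "inner w (x1 - xs) \<le> (r+L) * inner (xk - x1) (x1 - xs)"
    using rL unfolding \<beta>_def by simp
  have pol: "2 * inner (xk - x1) (x1 - xs) = (norm (xk-xs))\<^sup>2 - (norm (x1-xs))\<^sup>2 - (norm \<Delta>)\<^sup>2"
  proof -
    have e: "xk - xs = (x1 - xs) + (-1) *\<^sub>R \<Delta>" unfolding \<Delta>_def by simp
    have "(norm (xk-xs))\<^sup>2 = (norm (x1-xs))\<^sup>2 - 2 * inner (x1 - xs) \<Delta> + (norm \<Delta>)\<^sup>2"
      unfolding e norm_add_sq by simp
    moreover have "inner (xk - x1) (x1 - xs) = - inner (x1 - xs) \<Delta>"
      unfolding \<Delta>_def by (simp add: inner_diff_left inner_diff_right inner_commute[of x1 xs] inner_commute[of xk xs] inner_commute[of x1 xk])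
    ultimately show ?thesis by simp
  qed
  have D1: "l x1 \<le> l xk + inner (gl xk) \<Delta> + L/2 * (norm \<Delta>)\<^sup>2"
    unfolding \<Delta>_def by (rule descent[OF l_grad X(1) xk x1X Lip])
  have T1: "l xk + inner (gl xk) (xs - xk) \<le> l xs"
    by (rule tangent[OF l_grad X(1) xk xs l_convex])
  have "inner ((yk + s *\<^sub>R (F *v xk)) - y1) (ys - y1) \<le> 0"
    unfolding y1 using closest_point_dot[OF Y ys] by simp
  then have "s * inner (ys - y1) (F *v xk) \<le> inner (y1 - yk) (ys - y1)"
    by (simp add: inner_diff_left inner_add_left inner_commute algebra_simps)
  moreover have "2 * inner (y1 - yk) (ys - y1) = (norm (ys-yk))\<^sup>2 - (norm (ys-y1))\<^sup>2 - (norm (y1 - yk))\<^sup>2"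
  proof -
    have "ys - yk = (ys - y1) + 1 *\<^sub>R (y1 - yk)" by simp
    then have "(norm (ys-yk))\<^sup>2 = (norm (ys-y1))\<^sup>2 + 2 * inner (ys - y1) (y1 - yk) + (norm (y1-yk))\<^sup>2"
      by (metis norm_add_sq mult_1 mult.right_neutral power_one)
    then show ?thesis by (simp add: inner_commute)
  qed
  ultimately have "2 * (s * inner (ys - y1) (F *v xk)) \<le> (norm (ys-yk))\<^sup>2 - (norm (ys-y1))\<^sup>2"
    using zero_le_power2[of "norm (y1 - yk)"] by linarith
  then have "2 * s * inner (ys - y1) (F *v xk) \<le> (norm (ys-yk))\<^sup>2 - (norm (ys-y1))\<^sup>2"
    by (simp add: mult.assoc)
  then have P2: "inner (ys - y1) (F *v xk) \<le> ((norm (ys-yk))\<^sup>2 - (norm (ys-y1))\<^sup>2) / (2 * s)"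
    using s by (simp add: field_simps)
  have Y1: "- inner \<delta> \<Delta> \<le> (norm \<delta>)\<^sup>2 / r + r * (norm \<Delta>)\<^sup>2 / 4"
  proof (rule young_gen[OF _ _ r])
    have "\<bar>inner \<delta> \<Delta>\<bar> \<le> norm \<delta> * norm \<Delta>" by (rule Cauchy_Schwarz_ineq2)
    then have "(- inner \<delta> \<Delta>)\<^sup>2 \<le> (norm \<delta> * norm \<Delta>)\<^sup>2"
      using sq_le_of_abs by simp
    then show "(- inner \<delta> \<Delta>)\<^sup>2 \<le> (norm \<delta>)\<^sup>2 * (norm \<Delta>)\<^sup>2" by (simp add: power_mult_distrib)
  qed simp_all
  have lam0: "lam \<ge> 0"
  proof -
    have "0 \<le> (norm (F *v axis undefined 1))\<^sup>2" by simp
    also have "\<dots> \<le> lam * (norm (axis undefined (1::real) :: real^'n))\<^sup>2" unfolding lam_def by (rule eig_bound)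
    finally show ?thesis by simp
  qed
  have Y2: "inner (ys - y1) (F *v \<Delta>) \<le> lam * DY\<^sup>2 / r + r * (norm \<Delta>)\<^sup>2 / 4"
  proof -
    have "lam * DY\<^sup>2 / r = (lam * DY\<^sup>2) / r" by simp
    have "inner (ys - y1) (F *v \<Delta>) \<le> (lam * DY\<^sup>2) / r + r * (norm \<Delta>)\<^sup>2 / 4"
    proof (rule young_gen[OF _ _ r])
      have "\<bar>inner (ys - y1) (F *v \<Delta>)\<bar> \<le> norm (ys - y1) * norm (F *v \<Delta>)" by (rule Cauchy_Schwarz_ineq2)
      then have "(inner (ys - y1) (F *v \<Delta>))\<^sup>2 \<le> (norm (ys - y1))\<^sup>2 * (norm (F *v \<Delta>))\<^sup>2"
        using sq_le_of_abs by (metis power_mult_distrib)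
      also have "\<dots> \<le> DY\<^sup>2 * (lam * (norm \<Delta>)\<^sup>2)"
        using DY eig_bound[of F \<Delta>] unfolding lam_def
        by (intro mult_mono power_mono) auto
      finally show "(inner (ys - y1) (F *v \<Delta>))\<^sup>2 \<le> lam * DY\<^sup>2 * (norm \<Delta>)\<^sup>2" by (simp add: algebra_simps)
    qed (use lam0 in simp_all)
    then show ?thesis by simp
  qed
  have I1: "inner w (x1 - xs) = inner (gl xk) (x1 - xs) + inner \<delta> (xk - xs) + inner \<delta> \<Delta>
      + inner y1 (F *v x1) - inner y1 (F *v xs)"
    unfolding w_def \<delta>_def \<Delta>_def
    by (simp add: inner_add_left inner_diff_left inner_diff_right dot_lmul_matrix matrix_vector_right_distrib
        matrix_vector_mult_diff_distrib algebra_simps)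
  have I2: "inner (gl xk) (x1 - xs) = inner (gl xk) \<Delta> - inner (gl xk) (xs - xk)"
    unfolding \<Delta>_def by (simp add: inner_diff_right)
  have I3: "inner (ys - y1) (F *v x1) = inner (ys - y1) (F *v xk) + inner (ys - y1) (F *v \<Delta>)"
    unfolding \<Delta>_def by (simp add: matrix_vector_mult_diff_distrib inner_diff_right)
  have I4: "Psaddle l F ys x1 - Psaddle l F y1 xs = l x1 - l xs + inner (ys - y1) (F *v x1)
        + inner y1 (F *v x1) - inner y1 (F *v xs)"
    unfolding Psaddle_def by (simp add: inner_diff_left)
  have E: "(r+L) * inner (xk - x1) (x1 - xs) = (r+L)/2 * ((norm (xk-xs))\<^sup>2 - (norm (x1-xs))\<^sup>2)
      - r * (norm \<Delta>)\<^sup>2 / 4 - r * (norm \<Delta>)\<^sup>2 / 4 - L/2 * (norm \<Delta>)\<^sup>2"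
  proof -
    have "(r+L)/2 * ((norm (xk-xs))\<^sup>2 - (norm (x1-xs))\<^sup>2)
      - r * (norm \<Delta>)\<^sup>2 / 4 - r * (norm \<Delta>)\<^sup>2 / 4 - L/2 * (norm \<Delta>)\<^sup>2
      = (r+L)/2 * ((norm (xk-xs))\<^sup>2 - (norm (x1-xs))\<^sup>2 - (norm \<Delta>)\<^sup>2)" by (simp add: field_simps)
    also have "\<dots> = (r+L)/2 * (2 * inner (xk - x1) (x1 - xs))" unfolding pol ..
    finally show ?thesis by simp
  qed
  show ?thesis
    using P1 E D1 T1 P2 Y1 Y2 I1 I2 I3 I4 unfolding \<delta>_def[symmetric] lam_def[symmetric]
    by linarith
qed

lemma telescope_bound:
  fixes c a :: "nat \<Rightarrow> real"
  assumes mono: "\<And>k. c k \<le> c (Suc k)" and c0: "\<And>k. c k \<ge> 0"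
    and a: "\<And>k. 0 \<le> a k" "\<And>k. a k \<le> A"
  shows "(\<Sum>k\<le>t. c k * (a k - a (Suc k))) \<le> c t * A"
proof -
  have "(\<Sum>k\<le>t. c k * (a k - a (Suc k))) \<le> c t * A - c t * a (Suc t)"
  proof (induction t)
    case 0
    have "c 0 * a 0 \<le> c 0 * A" using c0[of 0] a(2)[of 0] by (rule mult_left_mono[rotated])
    then show ?case by (simp add: algebra_simps)
  next
    case (Suc t)
    have "(\<Sum>k\<le>Suc t. c k * (a k - a (Suc k))) \<le> c t * A - c t * a (Suc t) + c (Suc t) * (a (Suc t) - a (Suc (Suc t)))"
      using Suc by simp
    also have "\<dots> = c t * A + (c (Suc t) - c t) * a (Suc t) - c (Suc t) * a (Suc (Suc t))"
      by (simp add: algebra_simps)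
    also have "\<dots> \<le> c t * A + (c (Suc t) - c t) * A - c (Suc t) * a (Suc (Suc t))"
      using mono[of t] a(2)[of "Suc t"] by (simp add: mult_left_mono)
    finally show ?case by (simp add: algebra_simps)
  qed
  also have "\<dots> \<le> c t * A" using c0[of t] a(1)[of "Suc t"] by simp
  finally show ?thesis .
qed

lemma sum_inv_sqrt:
  "(\<Sum>k\<le>t. 1 / sqrt (real (k+1))) \<le> 2 * sqrt (real (t+1))"
proof (induction t)
  case 0 then show ?case by simp
next
  case (Suc t)
  define a where "a = sqrt (real t + 1)"
  define b where "b = sqrt (real t + 2)"
  have a0: "a > 0" unfolding a_def by simp
  have b0: "b > 0" unfolding b_def by simp
  have b2: "b * b = real t + 2" unfolding b_def by simp
  have a2: "a * a = real t + 1" unfolding a_def by simp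
  have "(a*b)\<^sup>2 = (a*a) * (b*b)" by (simp add: power2_eq_square algebra_simps)
  also have "\<dots> = (real t + 1) * (real t + 2)" using a2 b2 by simp
  also have "\<dots> \<le> (real t + 2 - 1/2)\<^sup>2" by (simp add: power2_eq_square algebra_simps)
  finally have "(a*b)\<^sup>2 \<le> (real t + 2 - 1/2)\<^sup>2" .
  then have "a * b \<le> real t + 2 - 1/2" by (rule power2_le_imp_le) simp
  then have 1: "1 \<le> (2 * b - 2 * a) * b" using b2 by (simp add: algebra_simps)
  have "1 / b \<le> ((2 * b - 2 * a) * b) / b" using 1 b0 by (intro divide_right_mono) auto
  then have 2: "1 / b \<le> 2 * b - 2 * a" using b0 by simp
  have e1: "sqrt (real (t+1)) = a" unfolding a_def by simp
  have e2: "sqrt (real (Suc t + 1)) = b" unfolding b_def by (simp add: add.commute)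
  have "(\<Sum>k\<le>Suc t. 1 / sqrt (real (k+1))) = (\<Sum>k\<le>t. 1 / sqrt (real (k+1))) + 1 / b"
    using e2 by simp
  also have "\<dots> \<le> 2 * a + 1 / b" using Suc e1 by simp
  also have "\<dots> \<le> 2 * b" using 2 by simp
  finally show ?case using e2 by simp
qed

primrec iter :: "(nat \<Rightarrow> 'a \<Rightarrow> 'e \<Rightarrow> 'a) \<Rightarrow> 'a \<Rightarrow> nat \<Rightarrow> (nat \<Rightarrow> 'e) \<Rightarrow> 'a" where
  "iter f a0 0 z = a0"
| "iter f a0 (Suc k) z = f k (iter f a0 k z) (z (Suc k))"

lemma iter_cong: "(\<And>i. i \<le> k \<Longrightarrow> z i = z' i) \<Longrightarrow> iter f a0 k z = iter f a0 k z'"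
  by (induction k) auto

lemma iter_meas:
  assumes f: "\<And>k. (\<lambda>(a,e). f k a e) \<in> measurable (N \<Otimes>\<^sub>M D) N" and a0: "a0 \<in> space N"
  shows "iter f a0 k \<in> measurable (PiM {..k} (\<lambda>_. D)) N"
proof (induction k)
  case 0
  show ?case using a0 by simp
next
  case (Suc k)
  have p: "(\<lambda>z. (iter f a0 k (restrict z {..k}), z (Suc k))) \<in> measurable (PiM {..Suc k} (\<lambda>_. D)) (N \<Otimes>\<^sub>M D)"
  proof (rule measurable_Pair)
    show "(\<lambda>z. iter f a0 k (restrict z {..k})) \<in> measurable (PiM {..Suc k} (\<lambda>_. D)) N"
      by (rule measurable_compose[OF measurable_restrict_subset[of "{..k}" "{..Suc k}"] Suc]) auto
    show "(\<lambda>z. z (Suc k)) \<in> measurable (PiM {..Suc k} (\<lambda>_. D)) D"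
      by (rule measurable_component_singleton) auto
  qed
  have "(\<lambda>z. (\<lambda>(a,e). f k a e) (iter f a0 k (restrict z {..k}), z (Suc k))) \<in> measurable (PiM {..Suc k} (\<lambda>_. D)) N"
    using measurable_compose[OF p f] by simp
  moreover have "iter f a0 (Suc k) z = (\<lambda>(a,e). f k a e) (iter f a0 k (restrict z {..k}), z (Suc k))" for z
    by (simp add: iter_cong[of k z "restrict z {..k}"])
  ultimately show ?case by simp
qed

lemma indep_expect:
  fixes H :: "'p \<times> 'p \<Rightarrow> real"
  assumes M: "prob_space M"
    and ind: "prob_space.indep_var M P Z P2 W"
    and Hm: "H \<in> borel_measurable (P \<Otimes>\<^sub>M P2)"
    and Hi: "integrable (distr M P Z \<Otimes>\<^sub>M distr M P2 W) H"
  shows "integrable M (\<lambda>\<omega>. H (Z \<omega>, W \<omega>))"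
    "(\<integral>\<omega>. H (Z \<omega>, W \<omega>) \<partial>M) = (\<integral>z. (\<integral>e. H (z,e) \<partial>(distr M P2 W)) \<partial>(distr M P Z))"
    "integrable (distr M P Z) (\<lambda>z. \<integral>e. H (z,e) \<partial>(distr M P2 W))"
proof -
  interpret M: prob_space M by (rule M)
  have rv: "Z \<in> measurable M P" "W \<in> measurable M P2"
    and eq: "distr M P Z \<Otimes>\<^sub>M distr M P2 W = distr M (P \<Otimes>\<^sub>M P2) (\<lambda>x. (Z x, W x))"
    using ind unfolding M.indep_var_distribution_eq by auto
  interpret Q: prob_space "distr M P Z" by (rule M.prob_space_distr[OF rv(1)])
  interpret R: prob_space "distr M P2 W" by (rule M.prob_space_distr[OF rv(2)])
  interpret QD: pair_prob_space "distr M P Z" "distr M P2 W" ..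
  have pm: "(\<lambda>x. (Z x, W x)) \<in> measurable M (P \<Otimes>\<^sub>M P2)" using rv by (rule measurable_Pair)
  show "integrable M (\<lambda>\<omega>. H (Z \<omega>, W \<omega>))"
    using Hi integrable_distr_eq[OF pm Hm] eq by simp
  have "(\<integral>\<omega>. H (Z \<omega>, W \<omega>) \<partial>M) = integral\<^sup>L (distr M P Z \<Otimes>\<^sub>M distr M P2 W) H"
    using integral_distr[OF pm Hm] eq by simp
  also have "\<dots> = (\<integral>z. (\<integral>e. H (z,e) \<partial>(distr M P2 W)) \<partial>(distr M P Z))"
    by (rule QD.integral_fst'[OF Hi, symmetric])
  finally show "(\<integral>\<omega>. H (Z \<omega>, W \<omega>) \<partial>M) = (\<integral>z. (\<integral>e. H (z,e) \<partial>(distr M P2 W)) \<partial>(distr M P Z))" .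
  show "integrable (distr M P Z) (\<lambda>z. \<integral>e. H (z,e) \<partial>(distr M P2 W))"
    by (rule QD.integrable_fst'[OF Hi])
qed
lemma integrable_pair_nonneg:
  fixes H :: "'p \<times> 'e \<Rightarrow> real"
  assumes Q: "prob_space Q" and D: "prob_space D"
    and Hm: "H \<in> borel_measurable (Q \<Otimes>\<^sub>M D)" and H0: "\<And>p. 0 \<le> H p"
    and Hb: "\<And>z. z \<in> space Q \<Longrightarrow> integrable D (\<lambda>e. H (z,e)) \<and> (\<integral>e. H (z,e) \<partial>D) \<le> c"
  shows "integrable (Q \<Otimes>\<^sub>M D) H"
proof (rule integrableI_nonneg[OF Hm])
  interpret Q: prob_space Q by (rule Q)
  interpret D: prob_space D by (rule D)
  interpret QD: pair_prob_space Q D ..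
  show "AE x in Q \<Otimes>\<^sub>M D. 0 \<le> H x" using H0 by simp
  have "(\<integral>\<^sup>+ x. ennreal (H x) \<partial>(Q \<Otimes>\<^sub>M D)) = (\<integral>\<^sup>+ z. \<integral>\<^sup>+ e. ennreal (H (z, e)) \<partial>D \<partial>Q)"
    using Hm by (subst D.nn_integral_fst[symmetric]) auto
  also have "\<dots> \<le> (\<integral>\<^sup>+ z. ennreal c \<partial>Q)"
  proof (rule nn_integral_mono)
    fix z assume z: "z \<in> space Q"
    have "(\<integral>\<^sup>+ e. ennreal (H (z, e)) \<partial>D) = ennreal (\<integral>e. H (z,e) \<partial>D)"
      using Hb[OF z] H0 by (intro nn_integral_eq_integral) auto
    also have "\<dots> \<le> ennreal c" using Hb[OF z] by (intro ennreal_leI) auto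
    finally show "(\<integral>\<^sup>+ e. ennreal (H (z, e)) \<partial>D) \<le> ennreal c" .
  qed
  also have "\<dots> = ennreal c" by (simp add: Q.emeasure_space_1)
  also have "\<dots> < \<infinity>" by simp
  finally show "(\<integral>\<^sup>+ x. ennreal (H x) \<partial>(Q \<Otimes>\<^sub>M D)) < \<infinity>" .
qed

lemma le_1_sq: fixes t :: real shows "t \<le> 1 + t\<^sup>2"
proof -
  have "0 \<le> (t - 1/2)\<^sup>2" by simp
  thus ?thesis by (simp add: power2_eq_square algebra_simps)
qed

lemma noise_expect:
  fixes G :: "real^'n \<Rightarrow> 'e \<Rightarrow> real^'n" and gl :: "real^'n \<Rightarrow> real^'n"
    and \<phi> :: "(nat \<Rightarrow> 'e) \<Rightarrow> real^'n" and \<xi> :: "nat \<Rightarrow> 'w \<Rightarrow> 'e"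
  assumes M: "prob_space M" and D: "prob_space D"
    and ind: "prob_space.indep_vars M (\<lambda>_. D) \<xi> UNIV"
    and dist: "distr M D (\<xi> (Suc k)) = D"
    and \<phi>m: "\<phi> \<in> borel_measurable (PiM {..k} (\<lambda>_. D))"
    and \<phi>X: "\<And>z. \<phi> z \<in> X" and Xb: "bounded X"
    and glm: "gl \<in> borel_measurable borel"
    and G_meas: "(\<lambda>(z, e). G z e) \<in> borel_measurable (borel \<Otimes>\<^sub>M D)"
    and G_unbiased: "\<forall>z\<in>X. integrable D (G z) \<and> (\<integral>e. G z e \<partial>D) = gl z"
    and G_var: "\<forall>z\<in>X. integrable D (\<lambda>e. (norm (G z e - gl z))\<^sup>2) \<and>
                   (\<integral>e. (norm (G z e - gl z))\<^sup>2 \<partial>D) \<le> c"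
  shows "integrable M (\<lambda>\<omega>. (norm (G (\<phi> (restrict (\<lambda>i. \<xi> i \<omega>) {..k})) (\<xi> (Suc k) \<omega>)
             - gl (\<phi> (restrict (\<lambda>i. \<xi> i \<omega>) {..k}))))\<^sup>2)"
    "(\<integral>\<omega>. (norm (G (\<phi> (restrict (\<lambda>i. \<xi> i \<omega>) {..k})) (\<xi> (Suc k) \<omega>)
             - gl (\<phi> (restrict (\<lambda>i. \<xi> i \<omega>) {..k}))))\<^sup>2 \<partial>M) \<le> c"
    "integrable M (\<lambda>\<omega>. inner (G (\<phi> (restrict (\<lambda>i. \<xi> i \<omega>) {..k})) (\<xi> (Suc k) \<omega>)
             - gl (\<phi> (restrict (\<lambda>i. \<xi> i \<omega>) {..k}))) (\<phi> (restrict (\<lambda>i. \<xi> i \<omega>) {..k}) - xs))"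
    "(\<integral>\<omega>. inner (G (\<phi> (restrict (\<lambda>i. \<xi> i \<omega>) {..k})) (\<xi> (Suc k) \<omega>)
             - gl (\<phi> (restrict (\<lambda>i. \<xi> i \<omega>) {..k}))) (\<phi> (restrict (\<lambda>i. \<xi> i \<omega>) {..k}) - xs) \<partial>M) = 0"
proof -
  interpret M: prob_space M by (rule M)
  interpret D: prob_space D by (rule D)
  let ?P = "PiM {..k} (\<lambda>_. D)"
  let ?P2 = "PiM {Suc k} (\<lambda>_. D)"
  define Z where "Z = (\<lambda>\<omega>. restrict (\<lambda>i. \<xi> i \<omega>) {..k})"
  define W where "W = (\<lambda>\<omega>. restrict (\<lambda>i. \<xi> i \<omega>) {Suc k})"
  have ind': "M.indep_var ?P Z ?P2 W"
    unfolding Z_def W_def by (rule M.indep_var_restrict[OF ind]) auto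
  have rv: "Z \<in> measurable M ?P" "W \<in> measurable M ?P2"
    using ind' unfolding M.indep_var_distribution_eq by auto
  have \<xi>m: "\<xi> (Suc k) \<in> measurable M D" using ind unfolding M.indep_vars_def by auto
  define Q where "Q = distr M ?P Z"
  define R where "R = distr M ?P2 W"
  interpret Q: prob_space Q unfolding Q_def by (rule M.prob_space_distr[OF rv(1)])
  interpret R: prob_space R unfolding R_def by (rule M.prob_space_distr[OF rv(2)])
  have ev: "(\<lambda>w. w (Suc k)) \<in> measurable ?P2 D"
    by (rule measurable_component_singleton) auto
  have WS: "W \<omega> (Suc k) = \<xi> (Suc k) \<omega>" for \<omega> unfolding W_def by simp
  have tr: "integrable R (\<lambda>w. g (w (Suc k))) \<longleftrightarrow> integrable D g"
    "(\<integral>w. g (w (Suc k)) \<partial>R) = (\<integral>e. g e \<partial>D)"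
    if gm: "g \<in> borel_measurable D" for g :: "'e \<Rightarrow> 'b::{banach, second_countable_topology}"
  proof -
    have gm': "(\<lambda>w. g (w (Suc k))) \<in> borel_measurable ?P2" using measurable_compose[OF ev gm] .
    have "integrable R (\<lambda>w. g (w (Suc k))) \<longleftrightarrow> integrable M (\<lambda>\<omega>. g (\<xi> (Suc k) \<omega>))"
      unfolding R_def using integrable_distr_eq[OF rv(2) gm'] WS by simp
    also have "\<dots> \<longleftrightarrow> integrable (distr M D (\<xi> (Suc k))) g"
      using integrable_distr_eq[OF \<xi>m gm] by simp
    finally show "integrable R (\<lambda>w. g (w (Suc k))) \<longleftrightarrow> integrable D g" using dist by simp
    have "(\<integral>w. g (w (Suc k)) \<partial>R) = (\<integral>\<omega>. g (\<xi> (Suc k) \<omega>) \<partial>M)"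
      unfolding R_def using integral_distr[OF rv(2) gm'] WS by simp
    also have "\<dots> = (\<integral>e. g e \<partial>(distr M D (\<xi> (Suc k))))"
      using integral_distr[OF \<xi>m gm] by simp
    finally show "(\<integral>w. g (w (Suc k)) \<partial>R) = (\<integral>e. g e \<partial>D)" using dist by simp
  qed
  have Gm: "(\<lambda>p. G (fst p) (snd p)) \<in> borel_measurable (borel \<Otimes>\<^sub>M D)"
    using G_meas by (simp add: case_prod_beta')
  have pm: "(\<lambda>p. (\<phi> (fst p), snd p (Suc k))) \<in> measurable (?P \<Otimes>\<^sub>M ?P2) (borel \<Otimes>\<^sub>M D)"
    using \<phi>m ev by measurable
  have Gpm: "(\<lambda>p. G (\<phi> (fst p)) (snd p (Suc k))) \<in> borel_measurable (?P \<Otimes>\<^sub>M ?P2)"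
    using measurable_compose[OF pm Gm] by simp
  have \<phi>pm: "(\<lambda>p. \<phi> (fst p)) \<in> borel_measurable (?P \<Otimes>\<^sub>M ?P2)" using \<phi>m by measurable
  have glpm: "(\<lambda>p. gl (\<phi> (fst p))) \<in> borel_measurable (?P \<Otimes>\<^sub>M ?P2)"
    using measurable_compose[OF \<phi>pm glm] by simp
  define H2 where "H2 = (\<lambda>p. (norm (G (\<phi> (fst p)) (snd p (Suc k)) - gl (\<phi> (fst p))))\<^sup>2)"
  define H1 where "H1 = (\<lambda>p. inner (G (\<phi> (fst p)) (snd p (Suc k)) - gl (\<phi> (fst p))) (\<phi> (fst p) - xs))"
  have H2m: "H2 \<in> borel_measurable (?P \<Otimes>\<^sub>M ?P2)" unfolding H2_def using Gpm glpm by measurable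
  have H1m: "H1 \<in> borel_measurable (?P \<Otimes>\<^sub>M ?P2)" unfolding H1_def using Gpm glpm \<phi>pm by measurable
  have sQ: "sets Q = sets ?P" "sets R = sets ?P2" unfolding Q_def R_def by simp_all
  have H2m': "H2 \<in> borel_measurable (Q \<Otimes>\<^sub>M R)" using H2m by (simp add: sets_pair_measure_cong[OF sQ] cong: measurable_cong_sets)
  have H1m': "H1 \<in> borel_measurable (Q \<Otimes>\<^sub>M R)" using H1m by (simp add: sets_pair_measure_cong[OF sQ] cong: measurable_cong_sets)
  have Gzm: "G a \<in> borel_measurable D" for a
  proof -
    have "(\<lambda>e. (a, e)) \<in> measurable D (borel \<Otimes>\<^sub>M D)" by measurable
    from measurable_compose[OF this Gm] show ?thesis by simp
  qed
  have in2: "integrable R (\<lambda>w. H2 (z, w)) \<and> (\<integral>w. H2 (z, w) \<partial>R) \<le> c" for z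
  proof -
    have gm: "(\<lambda>e. (norm (G (\<phi> z) e - gl (\<phi> z)))\<^sup>2) \<in> borel_measurable D" using Gzm by measurable
    show ?thesis unfolding H2_def using tr[OF gm] G_var \<phi>X[of z] by auto
  qed
  have in1: "integrable R (\<lambda>w. H1 (z, w)) \<and> (\<integral>w. H1 (z, w) \<partial>R) = 0" for z
  proof -
    have gm: "(\<lambda>e. inner (G (\<phi> z) e - gl (\<phi> z)) (\<phi> z - xs)) \<in> borel_measurable D" using Gzm by measurable
    have iG: "integrable D (\<lambda>e. G (\<phi> z) e - gl (\<phi> z))" using G_unbiased \<phi>X[of z] by auto
    have "(\<integral>e. inner (G (\<phi> z) e - gl (\<phi> z)) (\<phi> z - xs) \<partial>D) = inner (\<integral>e. G (\<phi> z) e - gl (\<phi> z) \<partial>D) (\<phi> z - xs)"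
      using iG by (rule integral_inner_left)
    also have "(\<integral>e. G (\<phi> z) e - gl (\<phi> z) \<partial>D) = 0"
      using G_unbiased \<phi>X[of z] by (simp add: D.prob_space)
    finally show ?thesis unfolding H1_def using tr[OF gm] iG by simp
  qed
  have I2: "integrable (Q \<Otimes>\<^sub>M R) H2"
  proof (rule integrable_pair_nonneg[where c=c, OF Q.prob_space_axioms R.prob_space_axioms H2m'])
    show "\<And>p. 0 \<le> H2 p" unfolding H2_def by simp
    show "\<And>z. z \<in> space Q \<Longrightarrow> integrable R (\<lambda>e. H2 (z, e)) \<and> (\<integral>e. H2 (z, e) \<partial>R) \<le> c"
      using in2 by blast
  qed
  obtain B where B: "\<forall>a\<in>X. norm a \<le> B" using Xb unfolding bounded_iff by auto
  have I1: "integrable (Q \<Otimes>\<^sub>M R) H1"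
  proof (rule Bochner_Integration.integrable_bound[OF _ H1m'])
    show "integrable (Q \<Otimes>\<^sub>M R) (\<lambda>p. (B + norm xs) * (1 + H2 p))"
    proof -
      interpret QR: pair_prob_space Q R ..
      show ?thesis using I2 by auto
    qed
    show "AE p in Q \<Otimes>\<^sub>M R. norm (H1 p) \<le> norm ((B + norm xs) * (1 + H2 p))"
    proof (intro AE_I2)
      fix p
      let ?d = "G (\<phi> (fst p)) (snd p (Suc k)) - gl (\<phi> (fst p))"
      have b: "norm (\<phi> (fst p) - xs) \<le> B + norm xs"
        using B \<phi>X norm_triangle_ineq4[of "\<phi> (fst p)" xs] by (meson add_right_mono order_trans)
      have "norm (H1 p) \<le> norm ?d * norm (\<phi> (fst p) - xs)" unfolding H1_def real_norm_def
        by (rule Cauchy_Schwarz_ineq2)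
      also have "\<dots> \<le> (1 + (norm ?d)\<^sup>2) * (B + norm xs)"
      proof (rule mult_mono)
        show "norm ?d \<le> 1 + (norm ?d)\<^sup>2"
          by (rule le_1_sq)
      qed (use b in auto)
      also have "\<dots> = norm ((B + norm xs) * (1 + H2 p))"
      proof -
        have "0 \<le> B + norm xs" using b norm_ge_zero order_trans by blast
        then show ?thesis unfolding H2_def by (simp add: abs_mult)
      qed
      finally show "norm (H1 p) \<le> norm ((B + norm xs) * (1 + H2 p))" .
    qed
  qed
  note E2 = indep_expect[OF M ind' H2m I2[unfolded Q_def R_def]]
  note E1 = indep_expect[OF M ind' H1m I1[unfolded Q_def R_def]]
  show "integrable M (\<lambda>\<omega>. (norm (G (\<phi> (restrict (\<lambda>i. \<xi> i \<omega>) {..k})) (\<xi> (Suc k) \<omega>)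
             - gl (\<phi> (restrict (\<lambda>i. \<xi> i \<omega>) {..k}))))\<^sup>2)"
    using E2(1) unfolding H2_def Z_def W_def by simp
  have "(\<integral>\<omega>. H2 (Z \<omega>, W \<omega>) \<partial>M) \<le> (\<integral>z. c \<partial>Q)"
    unfolding E2(2) Q_def[symmetric] R_def[symmetric]
    using E2(3) in2 unfolding Q_def[symmetric] R_def[symmetric]
    by (intro integral_mono) auto
  also have "\<dots> = c" by (simp add: Q.prob_space)
  finally show "(\<integral>\<omega>. (norm (G (\<phi> (restrict (\<lambda>i. \<xi> i \<omega>) {..k})) (\<xi> (Suc k) \<omega>)
             - gl (\<phi> (restrict (\<lambda>i. \<xi> i \<omega>) {..k}))))\<^sup>2 \<partial>M) \<le> c"
    unfolding H2_def Z_def W_def by simp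
  show "integrable M (\<lambda>\<omega>. inner (G (\<phi> (restrict (\<lambda>i. \<xi> i \<omega>) {..k})) (\<xi> (Suc k) \<omega>)
             - gl (\<phi> (restrict (\<lambda>i. \<xi> i \<omega>) {..k}))) (\<phi> (restrict (\<lambda>i. \<xi> i \<omega>) {..k}) - xs))"
    using E1(1) unfolding H1_def Z_def W_def by simp
  have "(\<integral>\<omega>. H1 (Z \<omega>, W \<omega>) \<partial>M) = 0"
    unfolding E1(2) Q_def[symmetric] R_def[symmetric] using in1 by simp
  then show "(\<integral>\<omega>. inner (G (\<phi> (restrict (\<lambda>i. \<xi> i \<omega>) {..k})) (\<xi> (Suc k) \<omega>)
             - gl (\<phi> (restrict (\<lambda>i. \<xi> i \<omega>) {..k}))) (\<phi> (restrict (\<lambda>i. \<xi> i \<omega>) {..k}) - xs) \<partial>M) = 0"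
    unfolding H1_def Z_def W_def by simp
qed

lemma final_arith:
  fixes E A B Lm \<sigma> L s :: real and t :: nat
  assumes A: "A \<ge> 0" and s: "s > 0"
    and E: "E \<le> (1/real (t+1)) * ((sqrt(real (t+1)) + L)/2 * A + B/(2 * s) + 2*Lm*B* sqrt(real (t+1)) + 2*\<sigma>\<^sup>2* sqrt(real (t+1)))"
  shows "E \<le> B / (2 * s * real (t + 1)) + L * A / (2 * real (t + 1))
               + (A + 2 * Lm * B + 2 * \<sigma>\<^sup>2) / sqrt (real (t + 1))"
proof -
  define q where "q = sqrt (real t + 1)"
  have q: "q > 0" unfolding q_def by simp
  have T: "real t + 1 = q * q" unfolding q_def by simp
  have T': "real (t+1) = q * q" using T by simp
  have sq: "sqrt (real (t + 1)) = q" unfolding q_def by simp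
  have "(1/real (t+1)) * ((sqrt(real (t+1)) + L)/2 * A + B/(2 * s) + 2*Lm*B* sqrt(real (t+1)) + 2*\<sigma>\<^sup>2* sqrt(real (t+1)))
      = B / (2 * s * real (t + 1)) + L * A / (2 * real (t + 1)) + (A/2 + 2 * Lm * B + 2 * \<sigma>\<^sup>2) / q"
    unfolding T' sq using q s by (simp add: field_simps)
  also have "\<dots> \<le> B / (2 * s * real (t + 1)) + L * A / (2 * real (t + 1)) + (A + 2 * Lm * B + 2 * \<sigma>\<^sup>2) / q"
    using A q by (simp add: divide_right_mono)
  finally show ?thesis using E unfolding sq by linarith
qed

lemma gap_convex:
  fixes F :: "real^'n^'m" and l :: "real^'n \<Rightarrow> real"
  assumes X: "convex X" and Y: "convex Y" and l_convex: "convex_on X l"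
    and xk: "\<And>k. xk k \<in> X" and yk: "\<And>k. yk k \<in> Y"
    and saddle: "is_saddle_point Y X (Psaddle l F) ys xs"
  shows "Psaddle l F ys (\<Sum>k\<le>t. (1 / real (t + 1)) *\<^sub>R xk k) - Psaddle l F (\<Sum>k\<le>t. (1 / real (t + 1)) *\<^sub>R yk k) xs
          \<le> (1 / real (t + 1)) * (\<Sum>k\<le>t. Psaddle l F ys (xk k) - Psaddle l F (yk k) xs)"
    "0 \<le> Psaddle l F ys (\<Sum>k\<le>t. (1 / real (t + 1)) *\<^sub>R xk k) - Psaddle l F (\<Sum>k\<le>t. (1 / real (t + 1)) *\<^sub>R yk k) xs"
proof -
  let ?a = "\<lambda>k::nat. 1 / real (t + 1)"
  have sa: "(\<Sum>k\<le>t. ?a k) = 1" by simp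
  have l1: "l (\<Sum>k\<le>t. ?a k *\<^sub>R xk k) \<le> (\<Sum>k\<le>t. ?a k * l (xk k))"
    by (rule convex_on_sum[OF _ _ l_convex sa]) (auto simp: xk)
  have lin1: "inner ys (F *v (\<Sum>k\<le>t. ?a k *\<^sub>R xk k)) = (\<Sum>k\<le>t. ?a k * inner ys (F *v xk k))"
    by (simp add: matrix_vector_mult_linear_continuous_at linear_sum[OF matrix_vector_mul_linear] o_def
        matrix_vector_mult_scaleR inner_sum_right)
  have lin2: "inner (\<Sum>k\<le>t. ?a k *\<^sub>R yk k) (F *v xs) = (\<Sum>k\<le>t. ?a k * inner (yk k) (F *v xs))"
    by (simp add: inner_sum_left)
  have "Psaddle l F ys (\<Sum>k\<le>t. ?a k *\<^sub>R xk k) - Psaddle l F (\<Sum>k\<le>t. ?a k *\<^sub>R yk k) xs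
      = l (\<Sum>k\<le>t. ?a k *\<^sub>R xk k) + (\<Sum>k\<le>t. ?a k * inner ys (F *v xk k)) - l xs - (\<Sum>k\<le>t. ?a k * inner (yk k) (F *v xs))"
    unfolding Psaddle_def lin1 lin2 by simp
  also have "\<dots> \<le> (\<Sum>k\<le>t. ?a k * l (xk k)) + (\<Sum>k\<le>t. ?a k * inner ys (F *v xk k)) - (\<Sum>k\<le>t. ?a k * l xs) - (\<Sum>k\<le>t. ?a k * inner (yk k) (F *v xs))"
    using l1 by (simp add: sum_distrib_left[symmetric])
  also have "\<dots> = (\<Sum>k\<le>t. ?a k * l (xk k) + ?a k * inner ys (F *v xk k) - ?a k * l xs - ?a k * inner (yk k) (F *v xs))"
    by (simp only: sum.distrib sum_subtractf)
  also have "\<dots> = (1 / real (t + 1)) * (\<Sum>k\<le>t. Psaddle l F ys (xk k) - Psaddle l F (yk k) xs)"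
    unfolding sum_distrib_left by (intro sum.cong refl) (simp add: Psaddle_def algebra_simps)
  finally show "Psaddle l F ys (\<Sum>k\<le>t. (1 / real (t + 1)) *\<^sub>R xk k) - Psaddle l F (\<Sum>k\<le>t. (1 / real (t + 1)) *\<^sub>R yk k) xs
          \<le> (1 / real (t + 1)) * (\<Sum>k\<le>t. Psaddle l F ys (xk k) - Psaddle l F (yk k) xs)" .
  have xb: "(\<Sum>k\<le>t. ?a k *\<^sub>R xk k) \<in> X" by (rule convex_sum[OF _ X sa]) (auto simp: xk)
  have yb: "(\<Sum>k\<le>t. ?a k *\<^sub>R yk k) \<in> Y" by (rule convex_sum[OF _ Y sa]) (auto simp: yk)
  show "0 \<le> Psaddle l F ys (\<Sum>k\<le>t. (1 / real (t + 1)) *\<^sub>R xk k) - Psaddle l F (\<Sum>k\<le>t. (1 / real (t + 1)) *\<^sub>R yk k) xs"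
    using saddle xb yb unfolding is_saddle_point_def by (meson diff_ge_0_iff_ge order_trans)
qed

theorem theorem1:
  fixes X :: "(real^'n) set" and Y :: "(real^'m) set"
    and F :: "real^'n^'m"
    and l :: "real^'n \<Rightarrow> real" and gl :: "real^'n \<Rightarrow> real^'n"
    and L s \<sigma> :: real
    and D :: "'e measure" and G :: "real^'n \<Rightarrow> 'e \<Rightarrow> real^'n"
    and M :: "'w measure" and \<xi> :: "nat \<Rightarrow> 'w \<Rightarrow> 'e"
    and x :: "nat \<Rightarrow> 'w \<Rightarrow> real^'n" and y :: "nat \<Rightarrow> 'w \<Rightarrow> real^'m"
    and x0 :: "real^'n" and y0 :: "real^'m"
    and xs :: "real^'n" and ys :: "real^'m"
    and t :: nat
  assumes X: "X \<noteq> {}" "convex X" "compact X"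
    and Y: "Y \<noteq> {}" "convex Y" "compact Y"
    and l_convex: "convex_on X l"
    and l_grad: "\<forall>z\<in>X. (l has_derivative (\<lambda>h. inner (gl z) h)) (at z within X)"
    and gl_cont: "continuous_on X gl"
    and L: "L \<ge> 0" "\<forall>z1\<in>X. \<forall>z2\<in>X. norm (gl z1 - gl z2) \<le> L * norm (z1 - z2)"
    and s: "s > 0"
    and \<sigma>: "\<sigma> > 0"
    and D: "prob_space D"
    and G_meas: "(\<lambda>(z, e). G z e) \<in> borel_measurable (borel \<Otimes>\<^sub>M D)"
    and G_unbiased: "\<forall>z\<in>X. integrable D (G z) \<and> (\<integral>e. G z e \<partial>D) = gl z"
    and G_var: "\<forall>z\<in>X. integrable D (\<lambda>e. (norm (G z e - gl z))\<^sup>2) \<and>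
                   (\<integral>e. (norm (G z e - gl z))\<^sup>2 \<partial>D) \<le> \<sigma>\<^sup>2"
    and G_subgauss: "\<forall>z\<in>X. integrable D (\<lambda>e. exp ((norm (G z e - gl z))\<^sup>2 / \<sigma>\<^sup>2)) \<and>
                   (\<integral>e. exp ((norm (G z e - gl z))\<^sup>2 / \<sigma>\<^sup>2) \<partial>D) \<le> exp 1"
    and M: "prob_space M"
    and \<xi>_indep: "prob_space.indep_vars M (\<lambda>_. D) \<xi> UNIV"
    and \<xi>_distr: "\<forall>k. distr M D (\<xi> k) = D"
    and init: "x0 \<in> X" "y0 \<in> Y" "\<forall>\<omega>. x 0 \<omega> = x0" "\<forall>\<omega>. y 0 \<omega> = y0"
    and y_step: "\<forall>k \<omega>. y (Suc k) \<omega> \<in> Y \<and>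
        (\<forall>v\<in>Y. Psaddle l F v (x k \<omega>) - (norm (v - y k \<omega>))\<^sup>2 / (2 * s)
               \<le> Psaddle l F (y (Suc k) \<omega>) (x k \<omega>) - (norm (y (Suc k) \<omega> - y k \<omega>))\<^sup>2 / (2 * s))"
    and x_step: "\<forall>k \<omega>. x (Suc k) \<omega> = closest_point X
        (x k \<omega> - (1 / (sqrt (real (k + 1)) + L)) *\<^sub>R
                   (G (x k \<omega>) (\<xi> (Suc k) \<omega>) + transpose F *v y (Suc k) \<omega>))"
    and saddle: "is_saddle_point Y X (Psaddle l F) ys xs"
  shows "let xbar = (\<lambda>\<omega>. \<Sum>k\<le>t. (1 / real (t + 1)) *\<^sub>R x (Suc k) \<omega>);
             ybar = (\<lambda>\<omega>. \<Sum>k\<le>t. (1 / real (t + 1)) *\<^sub>R y (Suc k) \<omega>);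
             gap = (\<lambda>\<omega>. Psaddle l F ys (xbar \<omega>) - Psaddle l F (ybar \<omega>) xs)
         in integrable M gap \<and>
            0 \<le> (\<integral>\<omega>. gap \<omega> \<partial>M) \<and>
            (\<integral>\<omega>. gap \<omega> \<partial>M) \<le>
               (diameter Y)\<^sup>2 / (2 * s * real (t + 1)) + L * (diameter X)\<^sup>2 / (2 * real (t + 1))
               + ((diameter X)\<^sup>2 + 2 * lambda_max (transpose F ** F) * (diameter Y)\<^sup>2 + 2 * \<sigma>\<^sup>2)
                 / sqrt (real (t + 1))"
proof -
  interpret M: prob_space M by (rule M)
  interpret Dp: prob_space D by (rule D)
  have Xc: "closed X" "bounded X" using X(3) compact_imp_closed compact_imp_bounded by auto
  have Yc: "closed Y" "bounded Y" using Y(3) compact_imp_closed compact_imp_bounded by auto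
  have xsX: "xs \<in> X" and ysY: "ys \<in> Y" using saddle unfolding is_saddle_point_def by auto
  define cy where "cy = (\<lambda>p::(real^'n) \<times> (real^'m). closest_point Y (snd p + s *\<^sub>R (F *v fst p)))"
  define f where "f = (\<lambda>k (p::(real^'n) \<times> (real^'m)) e. (closest_point X (fst p - (1 / (sqrt (real (k + 1)) + L)) *\<^sub>R (G (fst p) e + transpose F *v cy p)), cy p))"
  have ystep': "y (Suc k) \<omega> = closest_point Y (y k \<omega> + s *\<^sub>R (F *v x k \<omega>))" for k \<omega>
    using y_step y_proj[OF Y(2) Yc(1) _ s] by blast
  have path: "(x k \<omega>, y k \<omega>) = iter f (x0, y0) k (\<lambda>i. \<xi> i \<omega>)" for k \<omega>
  proof (induction k)
    case 0 then show ?case using init by simp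
  next
    case (Suc k)
    have "iter f (x0, y0) (Suc k) (\<lambda>i. \<xi> i \<omega>) = f k (x k \<omega>, y k \<omega>) (\<xi> (Suc k) \<omega>)"
      using Suc by simp
    also have "\<dots> = (x (Suc k) \<omega>, y (Suc k) \<omega>)"
      unfolding f_def cy_def using x_step ystep'[of k \<omega>] by simp
    finally show ?case by simp
  qed
  have xX: "x k \<omega> \<in> X" for k \<omega>
    by (cases k) (use init x_step closest_point_in_set[OF Xc(1) X(1)] in auto)
  have yY: "y k \<omega> \<in> Y" for k \<omega>
    by (cases k) (use init y_step in auto)
  define \<phi> where "\<phi> = (\<lambda>k z. fst (iter f (x0, y0) k z))"
  define \<psi> where "\<psi> = (\<lambda>k z. snd (iter f (x0, y0) k z))"
  have \<phi>X: "\<phi> k z \<in> X" for k z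
    by (cases k) (use init closest_point_in_set[OF Xc(1) X(1)] in \<open>auto simp: \<phi>_def f_def\<close>)
  have \<xi>m: "\<xi> i \<in> measurable M D" for i using \<xi>_indep unfolding M.indep_vars_def by auto
  have xpath: "x k \<omega> = \<phi> k (restrict (\<lambda>i. \<xi> i \<omega>) {..k})" for k \<omega>
    unfolding \<phi>_def using iter_cong[of k "\<lambda>i. \<xi> i \<omega>" "restrict (\<lambda>i. \<xi> i \<omega>) {..k}" f "(x0,y0)"]
      path[of k \<omega>] by (metis fst_conv atMost_iff restrict_apply')
  have ypath: "y k \<omega> = \<psi> k (restrict (\<lambda>i. \<xi> i \<omega>) {..k})" for k \<omega>
    unfolding \<psi>_def using iter_cong[of k "\<lambda>i. \<xi> i \<omega>" "restrict (\<lambda>i. \<xi> i \<omega>) {..k}" f "(x0,y0)"]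
      path[of k \<omega>] by (metis snd_conv atMost_iff restrict_apply')
  have cpX[measurable]: "closest_point X \<in> borel_measurable borel"
    by (rule borel_measurable_continuous_onI[OF continuous_on_closest_point[OF X(2) Xc(1) X(1)]])
  have cpY[measurable]: "closest_point Y \<in> borel_measurable borel"
    by (rule borel_measurable_continuous_onI[OF continuous_on_closest_point[OF Y(2) Yc(1) Y(1)]])
  have mvF[measurable]: "(\<lambda>v. F *v v) \<in> borel_measurable borel"
    by (rule borel_measurable_continuous_onI) (intro continuous_intros)
  have mvFt[measurable]: "(\<lambda>v. transpose F *v v) \<in> borel_measurable borel"
    by (rule borel_measurable_continuous_onI) (intro continuous_intros)
  have Gm: "(\<lambda>p. G (fst p) (snd p)) \<in> borel_measurable (borel \<Otimes>\<^sub>M D)"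
    using G_meas by (simp add: case_prod_beta')
  have Gm2[measurable]: "(\<lambda>q. G (fst (fst q)) (snd q)) \<in> borel_measurable ((borel \<Otimes>\<^sub>M borel) \<Otimes>\<^sub>M D)"
  proof -
    have "(\<lambda>q. (fst (fst q), snd q)) \<in> measurable ((borel \<Otimes>\<^sub>M borel) \<Otimes>\<^sub>M D) (borel \<Otimes>\<^sub>M D)" by measurable
    from measurable_compose[OF this Gm] show ?thesis by simp
  qed
  have fm: "(\<lambda>(p,e). f k p e) \<in> measurable ((borel \<Otimes>\<^sub>M borel) \<Otimes>\<^sub>M D) (borel \<Otimes>\<^sub>M borel)" for k
    unfolding f_def cy_def case_prod_beta' by measurable
  have itm: "iter f (x0, y0) k \<in> measurable (PiM {..k} (\<lambda>_. D)) (borel \<Otimes>\<^sub>M borel)" for k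
    by (rule iter_meas[OF fm]) (simp add: space_pair_measure)
  have \<phi>m: "\<phi> k \<in> borel_measurable (PiM {..k} (\<lambda>_. D))" for k
    unfolding \<phi>_def using measurable_compose[OF itm measurable_fst] by (simp add: comp_def)
  have \<psi>m: "\<psi> k \<in> borel_measurable (PiM {..k} (\<lambda>_. D))" for k
    unfolding \<psi>_def using measurable_compose[OF itm measurable_snd] by (simp add: comp_def)
  have Zm: "(\<lambda>\<omega>. restrict (\<lambda>i. \<xi> i \<omega>) {..k}) \<in> measurable M (PiM {..k} (\<lambda>_. D))" for k
    by (rule measurable_restrict) (rule \<xi>m)
  have xm[measurable]: "x k \<in> borel_measurable M" for k
  proof -
    have "x k = (\<lambda>\<omega>. \<phi> k (restrict (\<lambda>i. \<xi> i \<omega>) {..k}))" by (rule ext) (rule xpath)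
    then show ?thesis using measurable_compose[OF Zm \<phi>m] by simp
  qed
  have ym[measurable]: "y k \<in> borel_measurable M" for k
  proof -
    have "y k = (\<lambda>\<omega>. \<psi> k (restrict (\<lambda>i. \<xi> i \<omega>) {..k}))" by (rule ext) (rule ypath)
    then show ?thesis using measurable_compose[OF Zm \<psi>m] by simp
  qed
  define gl' where "gl' = (\<lambda>a. gl (closest_point X a))"
  have gl'X: "a \<in> X \<Longrightarrow> gl' a = gl a" for a unfolding gl'_def by (simp add: closest_point_self)
  have glm: "gl' \<in> borel_measurable borel"
  proof (rule borel_measurable_continuous_onI)
    show "continuous_on UNIV gl'" unfolding gl'_def
      by (rule continuous_on_compose2[OF gl_cont continuous_on_closest_point[OF X(2) Xc(1) X(1)]])
         (auto intro: closest_point_in_set[OF Xc(1) X(1)])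
  qed
  have G_unb': "\<forall>z\<in>X. integrable D (G z) \<and> (\<integral>e. G z e \<partial>D) = gl' z" using G_unbiased gl'X by auto
  have G_var': "\<forall>z\<in>X. integrable D (\<lambda>e. (norm (G z e - gl' z))\<^sup>2) \<and> (\<integral>e. (norm (G z e - gl' z))\<^sup>2 \<partial>D) \<le> \<sigma>\<^sup>2"
    using G_var gl'X by auto
  define h1 where "h1 = (\<lambda>k \<omega>. inner (G (x k \<omega>) (\<xi> (Suc k) \<omega>) - gl (x k \<omega>)) (x k \<omega> - xs))"
  define h2 where "h2 = (\<lambda>k \<omega>. (norm (G (x k \<omega>) (\<xi> (Suc k) \<omega>) - gl (x k \<omega>)))\<^sup>2)"
  have hs: "integrable M (h1 k) \<and> (\<integral>\<omega>. h1 k \<omega> \<partial>M) = 0 \<and> integrable M (h2 k) \<and> (\<integral>\<omega>. h2 k \<omega> \<partial>M) \<le> \<sigma>\<^sup>2" for k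
  proof -
    note NE = noise_expect(1,2)[OF M D \<xi>_indep \<xi>_distr[rule_format, of "Suc k"] \<phi>m[of k] \<phi>X Xc(2) glm G_meas G_unb' G_var']
      noise_expect(3,4)[OF M D \<xi>_indep \<xi>_distr[rule_format, of "Suc k"] \<phi>m[of k] \<phi>X Xc(2) glm G_meas G_unb' G_var', where xs=xs]
    have eq: "\<phi> k (restrict (\<lambda>i. \<xi> i \<omega>) {..k}) = x k \<omega>" for \<omega> using xpath by simp
    have eq2: "gl' (x k \<omega>) = gl (x k \<omega>)" for \<omega> using gl'X xX by simp
    have e1: "(\<lambda>\<omega>. inner (G (\<phi> k (restrict (\<lambda>i. \<xi> i \<omega>) {..k})) (\<xi> (Suc k) \<omega>) - gl' (\<phi> k (restrict (\<lambda>i. \<xi> i \<omega>) {..k})))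
              (\<phi> k (restrict (\<lambda>i. \<xi> i \<omega>) {..k}) - xs)) = h1 k"
      unfolding h1_def eq eq2 ..
    have e2: "(\<lambda>\<omega>. (norm (G (\<phi> k (restrict (\<lambda>i. \<xi> i \<omega>) {..k})) (\<xi> (Suc k) \<omega>) - gl' (\<phi> k (restrict (\<lambda>i. \<xi> i \<omega>) {..k}))))\<^sup>2) = h2 k"
      unfolding h2_def eq eq2 ..
    show ?thesis using NE unfolding e1 e2 by simp
  qed
  define xbar where "xbar = (\<lambda>\<omega>. \<Sum>k\<le>t. (1 / real (t + 1)) *\<^sub>R x (Suc k) \<omega>)"
  define ybar where "ybar = (\<lambda>\<omega>. \<Sum>k\<le>t. (1 / real (t + 1)) *\<^sub>R y (Suc k) \<omega>)"
  define gap where "gap = (\<lambda>\<omega>. Psaddle l F ys (xbar \<omega>) - Psaddle l F (ybar \<omega>) xs)"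
  have xbX: "xbar \<omega> \<in> X" for \<omega> unfolding xbar_def by (rule convex_sum[OF _ X(2)]) (auto simp: xX)
  have ybY: "ybar \<omega> \<in> Y" for \<omega> unfolding ybar_def by (rule convex_sum[OF _ Y(2)]) (auto simp: yY)
  have lc: "continuous_on X l"
    using l_grad has_derivative_continuous continuous_on_eq_continuous_within by blast
  have l'm[measurable]: "(\<lambda>u. l (closest_point X u)) \<in> borel_measurable borel"
  proof (rule borel_measurable_continuous_onI)
    show "continuous_on UNIV (\<lambda>u. l (closest_point X u))"
      by (rule continuous_on_compose2[OF lc continuous_on_closest_point[OF X(2) Xc(1) X(1)]])
         (auto intro: closest_point_in_set[OF Xc(1) X(1)])
  qed
  have gapm: "gap \<in> borel_measurable M"
  proof -
    have "gap = (\<lambda>\<omega>. l (closest_point X (xbar \<omega>)) + inner ys (F *v xbar \<omega>) - (l xs + inner (ybar \<omega>) (F *v xs)))"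
      unfolding gap_def Psaddle_def using xbX by (simp add: closest_point_self)
    also have "\<dots> \<in> borel_measurable M" unfolding xbar_def ybar_def by measurable
    finally show ?thesis .
  qed
  have cPg: "continuous_on (X \<times> Y) (\<lambda>p. Psaddle l F ys (fst p) - Psaddle l F (snd p) xs)"
  proof -
    have "continuous_on (X \<times> Y) (\<lambda>p. l (fst p))"
      by (rule continuous_on_compose2[OF lc continuous_on_fst[OF continuous_on_id]]) auto
    moreover have "continuous_on (X \<times> Y) (\<lambda>p. F *v fst p)"
    proof -
      have cF: "continuous_on UNIV (\<lambda>v. F *v v)" by (intro continuous_intros)
      show ?thesis by (rule continuous_on_compose2[OF cF continuous_on_fst[OF continuous_on_id]]) auto
    qed
    ultimately show ?thesis unfolding Psaddle_def by (intro continuous_intros)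
  qed
  have cpt: "compact ((\<lambda>p. Psaddle l F ys (fst p) - Psaddle l F (snd p) xs) ` (X \<times> Y))"
    by (rule compact_continuous_image[OF cPg compact_Times[OF X(3) Y(3)]])
  then obtain Bg where Bg: "\<forall>p\<in>X \<times> Y. norm (Psaddle l F ys (fst p) - Psaddle l F (snd p) xs) \<le> Bg"
  proof -
    from compact_imp_bounded[OF cpt] obtain b where "\<forall>v\<in>(\<lambda>p. Psaddle l F ys (fst p) - Psaddle l F (snd p) xs) ` (X \<times> Y). norm v \<le> b"
      unfolding bounded_iff by blast
    then show ?thesis using that by blast
  qed
  have gapi: "integrable M gap"
  proof (rule M.integrable_const_bound[where B=Bg])
    show "AE \<omega> in M. norm (gap \<omega>) \<le> Bg" using Bg xbX ybY unfolding gap_def by auto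
  qed (rule gapm)
  have gap0: "0 \<le> gap \<omega>" for \<omega>
    unfolding gap_def xbar_def ybar_def
    by (rule gap_convex(2)[OF X(2) Y(2) l_convex xX yY saddle])
  define lam where "lam = lambda_max (transpose F ** F)"
  have lam0: "lam \<ge> 0"
  proof -
    have "0 \<le> (norm (F *v axis undefined 1))\<^sup>2" by simp
    also have "\<dots> \<le> lam * (norm (axis undefined (1::real) :: real^'n))\<^sup>2" unfolding lam_def by (rule eig_bound)
    finally show ?thesis by simp
  qed
  define K where "K = (sqrt (real (t+1)) + L)/2 * (diameter X)\<^sup>2 + (diameter Y)\<^sup>2/(2 * s) + 2*lam*(diameter Y)\<^sup>2 * sqrt (real (t+1))"
  define Rf where "Rf = (\<lambda>\<omega>. (1/real (t+1)) * (K + (\<Sum>k\<le>t. h2 k \<omega> / sqrt (real (k+1)) - h1 k \<omega>)))"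
  have pw: "gap \<omega> \<le> Rf \<omega>" for \<omega>
  proof -
    define a where "a = (\<lambda>k. (norm (x k \<omega> - xs))\<^sup>2)"
    define b where "b = (\<lambda>k. (norm (ys - y k \<omega>))\<^sup>2)"
    define c where "c = (\<lambda>k::nat. (sqrt (real (k+1)) + L)/2)"
    have DYk: "norm (ys - y k \<omega>) \<le> diameter Y" for k
      using diameter_bounded_bound[OF Yc(2) ysY yY[of k \<omega>]] by (simp add: dist_norm)
    have DXk: "norm (x k \<omega> - xs) \<le> diameter X" for k
      using diameter_bounded_bound[OF Xc(2) xX[of k \<omega>] xsX] by (simp add: dist_norm)
    have step: "Psaddle l F ys (x (Suc k) \<omega>) - Psaddle l F (y (Suc k) \<omega>) xs \<le>
        c k * (a k - a (Suc k)) + (b k - b (Suc k)) / (2 * s)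
        + (h2 k \<omega> / sqrt (real (k+1)) - h1 k \<omega>) + lam * (diameter Y)\<^sup>2 * (1 / sqrt (real (k+1)))" for k
    proof -
      have "Psaddle l F ys (x (Suc k) \<omega>) - Psaddle l F (y (Suc k) \<omega>) xs \<le>
        (sqrt (real (k+1)) + L)/2 * ((norm (x k \<omega> - xs))\<^sup>2 - (norm (x (Suc k) \<omega> - xs))\<^sup>2)
        + ((norm (ys - y k \<omega>))\<^sup>2 - (norm (ys - y (Suc k) \<omega>))\<^sup>2) / (2 * s)
        - inner (G (x k \<omega>) (\<xi> (Suc k) \<omega>) - gl (x k \<omega>)) (x k \<omega> - xs)
        + (norm (G (x k \<omega>) (\<xi> (Suc k) \<omega>) - gl (x k \<omega>)))\<^sup>2 / sqrt (real (k+1))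
        + lambda_max (transpose F ** F) * (diameter Y)\<^sup>2 / sqrt (real (k+1))"
        by (rule step_ineq[OF X(2) Xc(1) Y(2) Yc(1) l_convex l_grad L(2) s _ L(1) xX xsX ysY DYk ystep' x_step[rule_format]]) simp
      then show ?thesis unfolding a_def b_def c_def h1_def h2_def lam_def by simp
    qed
    have "gap \<omega> \<le> (1 / real (t + 1)) * (\<Sum>k\<le>t. Psaddle l F ys (x (Suc k) \<omega>) - Psaddle l F (y (Suc k) \<omega>) xs)"
      unfolding gap_def xbar_def ybar_def
      by (rule gap_convex(1)[OF X(2) Y(2) l_convex xX yY saddle])
    also have "(\<Sum>k\<le>t. Psaddle l F ys (x (Suc k) \<omega>) - Psaddle l F (y (Suc k) \<omega>) xs)
        \<le> (\<Sum>k\<le>t. c k * (a k - a (Suc k)) + (b k - b (Suc k)) / (2 * s)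
        + (h2 k \<omega> / sqrt (real (k+1)) - h1 k \<omega>) + lam * (diameter Y)\<^sup>2 * (1 / sqrt (real (k+1))))"
      by (rule sum_mono) (rule step)
    also have "\<dots> = (\<Sum>k\<le>t. c k * (a k - a (Suc k))) + (\<Sum>k\<le>t. b k - b (Suc k)) / (2 * s)
        + (\<Sum>k\<le>t. h2 k \<omega> / sqrt (real (k+1)) - h1 k \<omega>) + lam * (diameter Y)\<^sup>2 * (\<Sum>k\<le>t. 1 / sqrt (real (k+1)))"
      by (simp add: sum.distrib sum_divide_distrib sum_distrib_left)
    also have "\<dots> \<le> K + (\<Sum>k\<le>t. h2 k \<omega> / sqrt (real (k+1)) - h1 k \<omega>)"
    proof -
      have t1: "(\<Sum>k\<le>t. c k * (a k - a (Suc k))) \<le> c t * (diameter X)\<^sup>2"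
      proof (rule telescope_bound)
        show "c k \<le> c (Suc k)" for k unfolding c_def by (simp add: divide_right_mono)
        show "0 \<le> c k" for k unfolding c_def using L(1) by simp
        show "0 \<le> a k" for k unfolding a_def by simp
        show "a k \<le> (diameter X)\<^sup>2" for k unfolding a_def by (rule power_mono[OF DXk]) simp
      qed
      have t2: "(\<Sum>k\<le>t. b k - b (Suc k)) / (2 * s) \<le> (diameter Y)\<^sup>2 / (2 * s)"
      proof -
        have "(\<Sum>k\<le>t. b k - b (Suc k)) = b 0 - b (Suc t)" by (rule sum_telescope)
        also have "\<dots> \<le> (diameter Y)\<^sup>2"
        proof -
          have "(norm (ys - y 0 \<omega>))\<^sup>2 \<le> (diameter Y)\<^sup>2" by (rule power_mono[OF DYk]) simp
          then show ?thesis unfolding b_def using zero_le_power2[of "norm (ys - y (Suc t) \<omega>)"] by linarith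
        qed
        finally show ?thesis using s by (simp add: divide_right_mono)
      qed
      have t4: "lam * (diameter Y)\<^sup>2 * (\<Sum>k\<le>t. 1 / sqrt (real (k+1))) \<le> lam * (diameter Y)\<^sup>2 * (2 * sqrt (real (t+1)))"
        using lam0 sum_inv_sqrt[of t] by (intro mult_left_mono) auto
      have e1: "c t * (diameter X)\<^sup>2 = (sqrt (real (t+1)) + L)/2 * (diameter X)\<^sup>2" unfolding c_def ..
      have e2: "lam * (diameter Y)\<^sup>2 * (2 * sqrt (real (t+1))) = 2*lam*(diameter Y)\<^sup>2 * sqrt (real (t+1))" by simp
      show ?thesis using t1 t2 t4 unfolding K_def e1 e2 by linarith
    qed
    finally show ?thesis unfolding Rf_def by (simp add: divide_right_mono)
  qed
  have hi1: "integrable M (h1 k)" and hi2: "integrable M (h2 k)" for k using hs by auto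
  have Ri: "integrable M Rf" unfolding Rf_def using hi1 hi2 by auto
  have "(\<integral>\<omega>. gap \<omega> \<partial>M) \<le> (\<integral>\<omega>. Rf \<omega> \<partial>M)" by (rule integral_mono[OF gapi Ri pw])
  also have "(\<integral>\<omega>. Rf \<omega> \<partial>M) = (1/real (t+1)) * (K + (\<Sum>k\<le>t. (\<integral>\<omega>. h2 k \<omega> \<partial>M) / sqrt (real (k+1)) - (\<integral>\<omega>. h1 k \<omega> \<partial>M)))"
    unfolding Rf_def using hi1 hi2 by (simp add: integral_sum M.prob_space)
  also have "\<dots> \<le> (1/real (t+1)) * (K + 2 * \<sigma>\<^sup>2 * sqrt (real (t+1)))"
  proof -
    have "(\<Sum>k\<le>t. (\<integral>\<omega>. h2 k \<omega> \<partial>M) / sqrt (real (k+1)) - (\<integral>\<omega>. h1 k \<omega> \<partial>M)) \<le> (\<Sum>k\<le>t. \<sigma>\<^sup>2 * (1 / sqrt (real (k+1))))"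
      using hs by (intro sum_mono) (simp add: divide_right_mono)
    also have "\<dots> = \<sigma>\<^sup>2 * (\<Sum>k\<le>t. 1 / sqrt (real (k+1)))" by (simp add: sum_distrib_left)
    also have "\<dots> \<le> \<sigma>\<^sup>2 * (2 * sqrt (real (t+1)))" using sum_inv_sqrt[of t] by (intro mult_left_mono) auto
    finally have "K + (\<Sum>k\<le>t. (\<integral>\<omega>. h2 k \<omega> \<partial>M) / sqrt (real (k+1)) - (\<integral>\<omega>. h1 k \<omega> \<partial>M)) \<le> K + 2 * \<sigma>\<^sup>2 * sqrt (real (t+1))"
      by simp
    then show ?thesis by (rule mult_left_mono) simp
  qed
  finally have final: "(\<integral>\<omega>. gap \<omega> \<partial>M) \<le> (diameter Y)\<^sup>2 / (2 * s * real (t + 1)) + L * (diameter X)\<^sup>2 / (2 * real (t + 1))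
               + ((diameter X)\<^sup>2 + 2 * lambda_max (transpose F ** F) * (diameter Y)\<^sup>2 + 2 * \<sigma>\<^sup>2)
                 / sqrt (real (t + 1))"
    unfolding lam_def[symmetric]
    by (intro final_arith[where s=s and L=L]) (use s in \<open>simp_all add: K_def algebra_simps\<close>)
  have nn: "0 \<le> (\<integral>\<omega>. gap \<omega> \<partial>M)" using gap0 by simp
  show ?thesis using gapi nn final unfolding Let_def gap_def xbar_def ybar_def by simp
qed

end
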